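(* Let $(X,\mathscr{A},\mu)$ be a $\sigma$-finite measure space, $\phi$ a nonsingular transformation of $X$ with $\mathsf{h}_\phi<\infty$ a.e. $[\mu]$, and $P\colon X\times\mathfrak{B}(\mathbb{R}_+)\to[0,1]$ an $\mathscr{A}$-measurable family of probability measures satisfying the strong consistency condition (SCC): $P(x,\sigma)=\dfrac{\int_\sigma t\,P(\phi(x),\mathrm{d}t)}{\mathsf{h}_\phi(\phi(x))}$ for $\mu$-a.e. $x\in X$, for every $\sigma\in\mathfrak{B}(\mathbb{R}_+)$. Then $P(x,\{0\})=0$ for $\mu$-a.e. $x\in X$, and for every Borel function $f\colon\mathbb{R}_+\to[0,\infty]$ and every $n\in\mathbb{N}$, $$\int_0^\infty f(t)P(x,\mathrm{d}t)=\frac{\int_0^\infty f(t)t^nP(\phi^n(x),\mathrm{d}t)}{\prod_{j=1}^n\mathsf{h}_\phi(\phi^j(x))}\quad\text{for }\mu\text{-a.e. }x\in X.$$ In particular, for all $n\in\mathbb{N}$ and $m\in\mathbb{Z}$: (i) $\int_\sigma t^mP(x,\mathrm{d}t)=\frac{\int_\sigma t^{m+n}P(\phi^n(x),\mathrm{d}t)}{\prod_{j=1}^n\mathsf{h}_\phi(\phi^j(x))}$ for $\mu$-a.e. $x$ and every $\sigma\in\mathfrak{B}(\mathbb{R}_+)$; (ii) $\int_\sigma t^mP(x,\mathrm{d}t)=\frac{\int_\sigma t^{m+n}P(\phi^n(x),\mathrm{d}t)}{\int_0^\infty t^nP(\phi^n(x),\mathrm{d}t)}$ for $\mu$-a.e.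 $x$ and every $\sigma\in\mathfrak{B}(\mathbb{R}_+)$; (iii) $\int_\sigma\frac1{t^n}P(x,\mathrm{d}t)=\frac{P(\phi^n(x),\sigma)}{\prod_{j=1}^n\mathsf{h}_\phi(\phi^j(x))}$ for $\mu$-a.e. $x$ and every $\sigma\in\mathfrak{B}(\mathbb{R}_+)$; (iv) $\int_0^\infty t^nP(\phi^n(x),\mathrm{d}t)=\prod_{j=1}^n\mathsf{h}_\phi(\phi^j(x))$ for $\mu$-a.e. $x$; (v) $\int_0^\infty\frac1{t^n}P(x,\mathrm{d}t)=\frac1{\prod_{j=1}^n\mathsf{h}_\phi(\phi^j(x))}$ for $\mu$-a.e. $x$. Moreover, if $\mathsf{h}_\phi>0$ a.e. $[\mu]$, then $\mathsf{E}(\mathsf{h}_{\phi^n})=\mathsf{h}_{\phi^n}$ a.e. $[\mu]$ for every $n\in\mathbb{Z}_+$.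
   Context: $\mathbb{R}_+=[0,\infty)$, $\mathbb{N}=\{1,2,\dots\}$, $\mathbb{Z}_+=\{0,1,\dots\}$. Conventions: $0\cdot\infty=\infty\cdot0=0$, $1/0=\infty$, $0/0=1$. Nonsingular: $\phi^{-1}(\Delta)\in\mathscr{A}$ for $\Delta\in\mathscr{A}$ and $\mu(\phi^{-1}(\Delta))=0$ when $\mu(\Delta)=0$. $\phi^n$ is the $n$-fold composition; $\mathsf{h}_{\phi^n}$ is the Radon–Nikodym derivative of $\mu\circ(\phi^n)^{-1}$ w.r.t. $\mu$. $\mathsf{E}(f)$ is the conditional expectation of an $\mathscr{A}$-measurable $f\ge0$ w.r.t. $\phi^{-1}(\mathscr{A})$: the a.e. unique $\phi^{-1}(\mathscr{A})$-measurable function with $\int(g\circ\phi)f\,\mathrm{d}\mu=\int(g\circ\phi)\mathsf{E}(f)\,\mathrm{d}\mu$ for all $\mathscr{A}$-measurable $g\ge0$. $\mathscr{A}$-measurable family of probability measures: each $P(x,\cdot)$ a Borel probability measure on $\mathbb{R}_+$, each $P(\cdot,\sigma)$ $\mathscr{A}$-measurable. *)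

theory Defs
  imports "HOL-Probability.Probability"
begin

definition borel_pos :: "real measure" where
  "borel_pos = restrict_space borel {0..}"

definition nonsingular :: "'a measure \<Rightarrow> ('a \<Rightarrow> 'a) \<Rightarrow> bool" where
  "nonsingular M \<phi> \<longleftrightarrow> \<phi> \<in> measurable M M \<and>
     (\<forall>A\<in>sets M. emeasure M A = 0 \<longrightarrow> emeasure M (\<phi> -` A \<inter> space M) = 0)"

definition hphi :: "'a measure \<Rightarrow> ('a \<Rightarrow> 'a) \<Rightarrow> 'a \<Rightarrow> ennreal" where
  "hphi M \<phi> = RN_deriv M (distr M M \<phi>)"

text \<open>Division on [0,\<infinity>] with the paper's conventions 1/0 = \<infinity>, 0/0 = 1.\<close>
definition ediv :: "ennreal \<Rightarrow> ennreal \<Rightarrow> ennreal" where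
  "ediv a b = (if a = 0 \<and> b = 0 then 1 else a / b)"

text \<open>Integer power t^m of t \<ge> 0 in [0,\<infinity>] (with 1/0 = \<infinity>).\<close>
definition tpow :: "real \<Rightarrow> int \<Rightarrow> ennreal" where
  "tpow t m = (if 0 \<le> m then ennreal t ^ nat m else inverse (ennreal t ^ nat (- m)))"

text \<open>g is a version of the conditional expectation E(f) of f w.r.t. phi^{-1}(A).\<close>
definition is_cond_exp :: "'a measure \<Rightarrow> ('a \<Rightarrow> 'a) \<Rightarrow> ('a \<Rightarrow> ennreal) \<Rightarrow> ('a \<Rightarrow> ennreal) \<Rightarrow> bool" where
  "is_cond_exp M \<phi> f g \<longleftrightarrow> g \<in> borel_measurable (vimage_algebra (space M) \<phi> M) \<and>
     (\<forall>u\<in>borel_measurable M. (\<integral>\<^sup>+x. u (\<phi> x) * f x \<partial>M) = (\<integral>\<^sup>+x. u (\<phi> x) * g x \<partial>M))"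

end

theory Submission imports Defs begin

lemma nonsingular_AE:
  assumes ns: "nonsingular M \<phi>" and ae: "AE x in M. Q x"
  shows "AE x in M. Q (\<phi> x)"
proof -
  from ae obtain N where N: "N \<in> null_sets M" "{x\<in>space M. \<not> Q x} \<subseteq> N"
    by (auto simp: eventually_ae_filter)
  have m: "\<phi> \<in> measurable M M" using ns by (simp add: nonsingular_def)
  have "\<phi> -` N \<inter> space M \<in> null_sets M"
    using ns N(1) m by (auto simp: nonsingular_def null_sets_def)
  moreover have "{x\<in>space M. \<not> Q (\<phi> x)} \<subseteq> \<phi> -` N \<inter> space M"
    using N(2) measurable_space[OF m] by auto
  ultimately show ?thesis by (rule AE_I')
qed

lemma nonsingular_funpow:
  assumes ns: "nonsingular M \<phi>"
  shows "nonsingular M (\<phi> ^^ n)"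
proof (induction n)
  case 0
  then show ?case by (simp add: nonsingular_def)
next
  case (Suc n)
  have m: "\<phi> \<in> measurable M M" using ns by (simp add: nonsingular_def)
  have mn: "(\<phi>^^n) \<in> measurable M M" using Suc by (simp add: nonsingular_def)
  have "(\<phi> ^^ Suc n) \<in> measurable M M" using m mn by (simp add: measurable_comp)
  moreover have "emeasure M ((\<phi> ^^ Suc n) -` A \<inter> space M) = 0"
    if A: "A \<in> sets M" "emeasure M A = 0" for A
  proof -
    have 1: "\<phi> -` A \<inter> space M \<in> sets M" using m A by auto
    have 2: "emeasure M (\<phi> -` A \<inter> space M) = 0" using ns A by (auto simp: nonsingular_def)
    have "(\<phi> ^^ Suc n) -` A \<inter> space M = (\<phi>^^n) -` (\<phi> -` A \<inter> space M) \<inter> space M"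
      using measurable_space[OF mn] by auto
    moreover have "emeasure M ((\<phi>^^n) -` (\<phi> -` A \<inter> space M) \<inter> space M) = 0"
      using Suc.IH 1 2 unfolding nonsingular_def by blast
    ultimately show ?thesis by metis
  qed
  ultimately show ?case unfolding nonsingular_def by blast
qed

lemma borel_rat_atMost:
  "borel = sigma UNIV ((\<lambda>r::real. {..r}) ` \<rat>)"
proof (rule borel_eq_sigmaI1[OF borel_eq_atMost])
  fix X :: "real set" assume "X \<in> range (\<lambda>a. {..a})"
  then obtain a where X: "X = {..a}" by auto
  have "\<forall>n::nat. \<exists>q\<in>\<rat>. a < q \<and> q < a + 1 / real (Suc n)"
    by (auto intro!: Rats_dense_in_real)
  then obtain q where q: "\<And>n. q n \<in> \<rat>" "\<And>n. a < q n" "\<And>n. q n < a + 1 / real (Suc n)"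
    by metis
  have "X = (\<Inter>n. {..q n})"
  proof (safe)
    fix x n assume "x \<in> X" then show "x \<le> q n" using q(2)[of n] X by auto
  next
    fix x assume x: "x \<in> (\<Inter>n. {..q n})"
    show "x \<in> X"
    proof (rule ccontr)
      assume "x \<notin> X" then have "a < x" using X by auto
      then obtain n where "1 / real (Suc n) < x - a"
        using reals_Archimedean[of "x - a"] by (auto simp: field_simps)
      moreover have "x \<le> q n" using x by auto
      ultimately show False using q(3)[of n] by linarith
    qed
  qed
  moreover have "(\<Inter>n. {..q n}) \<in> sets (sigma UNIV ((\<lambda>r::real. {..r}) ` \<rat>))"
    using q(1) by (intro sets.countable_INT') auto
  ultimately show "X \<in> sets (sigma UNIV ((\<lambda>r::real. {..r}) ` \<rat>))" by simp
qed auto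

definition Egen :: "real set set" where
  "Egen = (\<inter>) {0..} ` ((\<lambda>r::real. {..r}) ` \<rat>)"

lemma Egen_props:
  "sets borel_pos = sigma_sets {0..} Egen" "countable Egen" "Int_stable Egen"
  "Egen \<subseteq> Pow {0..}" "\<Union>Egen = {0..}" "Egen \<subseteq> sets borel_pos"
proof -
  have sb: "sets borel = sigma_sets UNIV ((\<lambda>r::real. {..r}) ` \<rat>)"
    by (subst borel_rat_atMost) simp
  have "{0..} \<in> sigma_sets UNIV ((\<lambda>r::real. {..r}) ` \<rat>)"
    using sb by (metis atLeast_borel)
  then show 1: "sets borel_pos = sigma_sets {0..} Egen"
    unfolding borel_pos_def sets_restrict_space Egen_def sb
    by (subst sigma_sets_Int) auto
  show "countable Egen" unfolding Egen_def using countable_rat by auto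
  show "Int_stable Egen"
  proof (rule Int_stableI)
    fix a b assume "a \<in> Egen" "b \<in> Egen"
    then obtain r s where rs: "r \<in> \<rat>" "s \<in> \<rat>" "a = {0..} \<inter> {..r}" "b = {0..} \<inter> {..s}"
      unfolding Egen_def by auto
    then have "a \<inter> b = {0..} \<inter> {..min r s}" by auto
    moreover have "min r s \<in> \<rat>" using rs by (simp add: min_def)
    ultimately show "a \<inter> b \<in> Egen" unfolding Egen_def by auto
  qed
  show "Egen \<subseteq> Pow {0..}" unfolding Egen_def by auto
  show "\<Union>Egen = {0..}"
  proof
    show "\<Union>Egen \<subseteq> {0..}" unfolding Egen_def by auto
    show "{0..} \<subseteq> \<Union>Egen"
    proof
      fix x :: real assume "x \<in> {0..}"
      moreover obtain n :: nat where "x \<le> real n" using real_arch_simple by blast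
      ultimately have "x \<in> {0..} \<inter> {..real n}" by auto
      moreover have "real n \<in> \<rat>" by simp
      ultimately show "x \<in> \<Union>Egen" unfolding Egen_def by blast
    qed
  qed
  show "Egen \<subseteq> sets borel_pos" using 1 by auto
qed

lemma tpow_powr:
  assumes t: "0 < t" shows "tpow t m = ennreal (t powr real_of_int m)"
proof (cases "0 \<le> m")
  case True
  then have eq: "real_of_int m = real (nat m)" by simp
  have "tpow t m = ennreal t ^ nat m" using True by (simp add: tpow_def)
  also have "\<dots> = ennreal (t ^ nat m)" using t by (intro ennreal_power) simp
  also have "t ^ nat m = t powr real (nat m)" by (rule powr_realpow[OF t, symmetric])
  finally show ?thesis by (simp only: eq)
next
  case False
  then have eq: "real_of_int m = - real (nat (-m))" by simp
  have p: "0 < t ^ nat (-m)" using t by simp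
  have "tpow t m = inverse (ennreal t ^ nat (-m))" using False by (simp add: tpow_def)
  also have "ennreal t ^ nat (-m) = ennreal (t ^ nat (-m))" using t by (intro ennreal_power) simp
  also have "inverse (ennreal (t ^ nat (-m))) = ennreal (inverse (t ^ nat (-m)))"
    by (rule inverse_ennreal[OF p])
  also have "inverse (t ^ nat (-m)) = t powr real_of_int m"
    unfolding eq powr_minus using powr_realpow[OF t] by simp
  finally show ?thesis .
qed

lemma tpow_mult:
  assumes t: "0 < t" shows "tpow t m * ennreal t ^ n = tpow t (m + int n)"
proof -
  have "tpow t m * ennreal t ^ n = ennreal (t powr real_of_int m) * ennreal (t ^ n)"
    using t by (simp only: tpow_powr[OF t] ennreal_power less_imp_le)
  also have "\<dots> = ennreal (t powr real_of_int m * t ^ n)"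
    using t by (intro ennreal_mult[symmetric]) auto
  also have "t ^ n = t powr real n" by (rule powr_realpow[OF t, symmetric])
  also have "t powr real_of_int m * t powr real n = t powr real_of_int (m + int n)"
    by (simp add: powr_add)
  finally show ?thesis by (simp only: tpow_powr[OF t])
qed

lemma tpow_meas[measurable]: "(\<lambda>t. tpow t m) \<in> borel_measurable borel"
  unfolding tpow_def by (cases "0 \<le> m") simp_all

lemma inv_pow_cancel:
  assumes t: "0 < t" shows "inverse (ennreal t ^ n) * ennreal t ^ n = 1"
proof -
  have e: "ennreal t ^ n = ennreal (t ^ n)" using t by (simp add: ennreal_power)
  have p: "0 < t ^ n" using t by simp
  have inv: "inverse (ennreal (t ^ n)) = ennreal (inverse (t ^ n))" by (rule inverse_ennreal[OF p])
  have "t ^ n \<noteq> 0" using p by linarith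
  then have c: "inverse (t ^ n) * t ^ n = 1" by (rule left_inverse)
  have "inverse (ennreal t ^ n) * ennreal t ^ n = ennreal (inverse (t ^ n)) * ennreal (t ^ n)"
    by (simp only: e inv)
  also have "\<dots> = ennreal (inverse (t ^ n) * t ^ n)"
    by (rule ennreal_mult[symmetric]) (use p in auto)
  also have "\<dots> = 1" by (simp only: c ennreal_1)
  finally show ?thesis .
qed

locale prop24 =
  fixes M :: "'a measure" and \<phi> :: "'a \<Rightarrow> 'a" and P :: "'a \<Rightarrow> real measure"
  assumes sf: "sigma_finite_measure M"
    and ns: "nonsingular M \<phi>"
    and hfin: "AE x in M. hphi M \<phi> x < \<infinity>"
    and Pprob: "\<And>x. x \<in> space M \<Longrightarrow> prob_space (P x) \<and> sets (P x) = sets borel_pos"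
    and Pmeas: "\<And>\<sigma>. \<sigma> \<in> sets borel_pos \<Longrightarrow> (\<lambda>x. emeasure (P x) \<sigma>) \<in> borel_measurable M"
    and SCC: "\<And>\<sigma>. \<sigma> \<in> sets borel_pos \<Longrightarrow>
       AE x in M. emeasure (P x) \<sigma> = ediv (\<integral>\<^sup>+t\<in>\<sigma>. ennreal t \<partial>P (\<phi> x)) (hphi M \<phi> (\<phi> x))"
begin

abbreviation "h \<equiv> hphi M \<phi>"

lemma phim[measurable]: "\<phi> \<in> measurable M M"
  using ns by (simp add: nonsingular_def)

lemma phinm[measurable]: "(\<phi>^^n) \<in> measurable M M"
  using nonsingular_funpow[OF ns] by (simp add: nonsingular_def)

lemma phis: "x \<in> space M \<Longrightarrow> (\<phi>^^n) x \<in> space M"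
  using measurable_space[OF phinm] by blast

lemma phis1: "x \<in> space M \<Longrightarrow> \<phi> x \<in> space M"
  using measurable_space[OF phim] by blast

lemma hm[measurable]: "h \<in> borel_measurable M"
  unfolding hphi_def by simp

lemma AEn: "AE x in M. Q x \<Longrightarrow> AE x in M. Q ((\<phi>^^n) x)"
  using nonsingular_AE[OF nonsingular_funpow[OF ns]] .

lemma AE1: "AE x in M. Q x \<Longrightarrow> AE x in M. Q (\<phi> x)"
  using nonsingular_AE[OF ns] .

lemma dens: "density M h = distr M M \<phi>"
proof -
  have "absolutely_continuous M (distr M M \<phi>)"
    unfolding absolutely_continuous_def
  proof
    fix A assume A: "A \<in> null_sets M"
    then have "emeasure M (\<phi> -` A \<inter> space M) = 0" using ns by (auto simp: nonsingular_def)
    then show "A \<in> null_sets (distr M M \<phi>)" using A by (auto simp: null_sets_def emeasure_distr)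
  qed
  then show ?thesis unfolding hphi_def
    using sigma_finite_measure.density_RN_deriv[OF sf] by simp
qed

lemma intcomp:
  assumes [measurable]: "u \<in> borel_measurable M"
  shows "(\<integral>\<^sup>+x. u (\<phi> x) \<partial>M) = (\<integral>\<^sup>+x. h x * u x \<partial>M)"
proof -
  have "(\<integral>\<^sup>+x. u (\<phi> x) \<partial>M) = (\<integral>\<^sup>+x. u x \<partial>distr M M \<phi>)"
    by (simp add: nn_integral_distr)
  also have "\<dots> = (\<integral>\<^sup>+x. u x \<partial>density M h)" by (simp add: dens)
  also have "\<dots> = (\<integral>\<^sup>+x. h x * u x \<partial>M)" by (simp add: nn_integral_density)
  finally show ?thesis .
qed

lemma hpos: "AE x in M. h (\<phi> x) \<noteq> 0"
proof -
  define Z where "Z = {y\<in>space M. h y = 0}"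
  have Z[measurable]: "Z \<in> sets M" unfolding Z_def by measurable
  have "emeasure M (\<phi> -` Z \<inter> space M) = (\<integral>\<^sup>+x. indicator (\<phi> -` Z \<inter> space M) x \<partial>M)"
    by (rule nn_integral_indicator[symmetric]) (rule measurable_sets[OF phim Z])
  also have "\<dots> = (\<integral>\<^sup>+x. indicator Z (\<phi> x) \<partial>M)"
    by (rule nn_integral_cong) (auto simp: indicator_def)
  also have "\<dots> = (\<integral>\<^sup>+x. h x * indicator Z x \<partial>M)" by (rule intcomp) simp
  also have "\<dots> = (\<integral>\<^sup>+x. 0 \<partial>M)"
    by (rule nn_integral_cong) (auto simp: Z_def indicator_def)
  finally have "\<phi> -` Z \<inter> space M \<in> null_sets M" by auto
  moreover have "{x\<in>space M. \<not> h (\<phi> x) \<noteq> 0} \<subseteq> \<phi> -` Z \<inter> space M"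
    using phis1 by (auto simp: Z_def)
  ultimately show ?thesis by (rule AE_I')
qed

lemma hfin1: "AE x in M. h (\<phi> x) < \<infinity>"
  using AE1[OF hfin] .

lemma Pspace: "x \<in> space M \<Longrightarrow> space (P x) = {0..}"
  using Pprob[of x] sets_eq_imp_space_eq[of "P x" borel_pos]
  by (simp add: borel_pos_def space_restrict_space)

lemma measP:
  assumes "g \<in> borel_measurable borel" "x \<in> space M"
  shows "g \<in> borel_measurable (P x)"
proof -
  have "g \<in> borel_measurable borel_pos"
    unfolding borel_pos_def by (rule measurable_restrict_space1[OF assms(1)])
  then show ?thesis using Pprob[OF assms(2)] measurable_cong_sets by blast
qed

lemma measP':
  assumes "g \<in> borel_measurable borel_pos" "x \<in> space M"
  shows "g \<in> borel_measurable (P x)"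
  using assms Pprob[OF assms(2)] measurable_cong_sets by blast

lemma Pker: "P \<in> measurable M (subprob_algebra borel_pos)"
  by (rule measurable_subprob_algebra)
     (auto simp: Pprob Pmeas prob_space_imp_subprob_space)

lemma intmeas:
  assumes "f \<in> borel_measurable borel_pos"
  shows "(\<lambda>x. \<integral>\<^sup>+t. f t \<partial>P x) \<in> borel_measurable M"
  using measurable_comp[OF Pker nn_integral_measurable_subprob_algebra[OF assms]]
  by (simp add: comp_def)

lemma ediv_eq: "b \<noteq> 0 \<Longrightarrow> ediv a b = a * inverse b"
  by (simp add: ediv_def divide_ennreal_def)

lemma D1: "AE x in M. P x = density (P (\<phi> x)) (\<lambda>t. ennreal t * inverse (h (\<phi> x)))"
proof -
  have "AE x in M. \<forall>\<sigma>\<in>Egen. emeasure (P x) \<sigma> = ediv (\<integral>\<^sup>+t\<in>\<sigma>. ennreal t \<partial>P (\<phi> x)) (h (\<phi> x))"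
    using Egen_props(2,6) SCC by (subst AE_ball_countable) auto
  moreover note hpos
  moreover have "AE x in M. x \<in> space M" by simp
  ultimately show ?thesis
  proof eventually_elim
    case (elim x)
    define y where "y = \<phi> x"
    have y: "y \<in> space M" using elim phis1 by (simp add: y_def)
    define c where "c = inverse (h y)"
    have wm: "(\<lambda>t. ennreal t * c) \<in> borel_measurable (P y)"
      using y by (intro measP) auto
    show ?case unfolding y_def[symmetric] c_def[symmetric]
    proof (rule measure_eqI_generator_eq_countable[where E=Egen and \<Omega>="{0..}" and A=Egen])
      show "Int_stable Egen" "Egen \<subseteq> Pow {0..}" "Egen \<subseteq> Egen" "\<Union>Egen = {0..}" "countable Egen"
        using Egen_props by auto
      show "sets (P x) = sigma_sets {0..} Egen" using Pprob[OF elim(3)] Egen_props(1) by simp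
      show "sets (density (P y) (\<lambda>t. ennreal t * c)) = sigma_sets {0..} Egen"
        using Pprob[OF y] Egen_props(1) by simp
      fix a assume a: "a \<in> Egen"
      show "emeasure (P x) a \<noteq> \<infinity>"
        using Pprob[OF elim(3)] prob_space_imp_subprob_space subprob_space.emeasure_subprob_space_less_top by auto
      have aS: "a \<in> sets (P y)" using a Egen_props(6) Pprob[OF y] by auto
      have [measurable]: "(\<lambda>t. ennreal t) \<in> borel_measurable (P y)" using y by (intro measP) auto
      have [measurable]: "a \<in> sets (P y)" by (rule aS)
      have im: "(\<lambda>t. ennreal t * indicator a t) \<in> borel_measurable (P y)"
        by measurable
      have "emeasure (density (P y) (\<lambda>t. ennreal t * c)) a = (\<integral>\<^sup>+t. ennreal t * c * indicator a t \<partial>P y)"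
        using wm aS by (rule emeasure_density)
      also have "\<dots> = (\<integral>\<^sup>+t. ennreal t * indicator a t * c \<partial>P y)"
        by (simp add: ac_simps)
      also have "\<dots> = (\<integral>\<^sup>+t. ennreal t * indicator a t \<partial>P y) * c"
        using im by (rule nn_integral_multc)
      also have "\<dots> = emeasure (P x) a"
        using elim(1) a elim(2) by (simp add: ediv_eq c_def y_def)
      finally show "emeasure (P x) a = emeasure (density (P y) (\<lambda>t. ennreal t * c)) a" by simp
    qed
  qed
qed

lemma Dn: "AE x in M. P x = density (P ((\<phi>^^n) x)) (\<lambda>t. ennreal t ^ n * (\<Prod>j\<in>{1..n}. inverse (h ((\<phi>^^j) x))))"
proof (induction n)
  case 0
  show ?case by (simp add: density_1)
next
  case (Suc n)
  have "AE x in M. P ((\<phi>^^n) x) = density (P (\<phi> ((\<phi>^^n) x))) (\<lambda>t. ennreal t * inverse (h (\<phi> ((\<phi>^^n) x))))"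
    by (rule AEn[OF D1])
  moreover note Suc
  moreover have "AE x in M. x \<in> space M" by simp
  ultimately show ?case
  proof eventually_elim
    case (elim x)
    define y where "y = (\<phi>^^Suc n) x"
    have y: "y \<in> space M" using phis elim(3) y_def by blast
    have yy: "\<phi> ((\<phi>^^n) x) = y" by (simp add: y_def)
    have [measurable]: "(\<lambda>t. ennreal t) \<in> borel_measurable (P y)" using y by (intro measP) auto
    have "P x = density (density (P y) (\<lambda>t. ennreal t * inverse (h y)))
                 (\<lambda>t. ennreal t ^ n * (\<Prod>j\<in>{1..n}. inverse (h ((\<phi>^^j) x))))"
      using elim(1,2) yy by simp
    also have "\<dots> = density (P y) (\<lambda>t. ennreal t * inverse (h y) * (ennreal t ^ n * (\<Prod>j\<in>{1..n}. inverse (h ((\<phi>^^j) x)))))"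
      by (rule density_density_eq) measurable
    also have "(\<lambda>t. ennreal t * inverse (h y) * (ennreal t ^ n * (\<Prod>j\<in>{1..n}. inverse (h ((\<phi>^^j) x)))))
       = (\<lambda>t. ennreal t ^ Suc n * (\<Prod>j\<in>{1..Suc n}. inverse (h ((\<phi>^^j) x))))"
      by (simp add: atLeastAtMostSuc_conv yy ac_simps)
    finally show ?case by (simp add: y_def)
  qed
qed

definition hp :: "nat \<Rightarrow> 'a \<Rightarrow> ennreal" where
  "hp n x = (\<Prod>j\<in>{1..n}. h ((\<phi>^^j) x))"

lemma goodn: "AE x in M. \<forall>j\<in>{1..n}. 0 < h ((\<phi>^^j) x) \<and> h ((\<phi>^^j) x) < \<infinity>"
proof (subst AE_ball_countable)
  show "countable {1..n}" by simp
  show "\<forall>j\<in>{1..n}. AE x in M. 0 < h ((\<phi> ^^ j) x) \<and> h ((\<phi> ^^ j) x) < \<infinity>"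
  proof
    fix j assume j: "j \<in> {1..n}"
    then have jj: "j = Suc (j - 1)" by auto
    have e: "\<And>x. (\<phi>^^j) x = \<phi> ((\<phi>^^(j-1)) x)" using jj by (metis comp_apply funpow.simps(2))
    have "AE x in M. h (\<phi> x) \<noteq> 0 \<and> h (\<phi> x) < \<infinity>" using hpos hfin1 by eventually_elim auto
    from AEn[OF this, of "j - 1"] show "AE x in M. 0 < h ((\<phi> ^^ j) x) \<and> h ((\<phi> ^^ j) x) < \<infinity>"
      by (simp add: e zero_less_iff_neq_zero)
  qed
qed

lemma prod_inv_ennreal:
  fixes f :: "nat \<Rightarrow> ennreal"
  assumes "finite S" "\<forall>i\<in>S. 0 < f i \<and> f i < \<infinity>"
  shows "(\<Prod>i\<in>S. inverse (f i)) = inverse (\<Prod>i\<in>S. f i) \<and> 0 < (\<Prod>i\<in>S. f i) \<and> (\<Prod>i\<in>S. f i) < \<infinity>"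
  using assms
proof (induction S rule: finite_induct)
  case empty
  then show ?case by simp
next
  case (insert a F)
  then have a: "0 < f a" "f a < \<infinity>" and IH: "(\<Prod>i\<in>F. inverse (f i)) = inverse (\<Prod>i\<in>F. f i)"
     "0 < (\<Prod>i\<in>F. f i)" "(\<Prod>i\<in>F. f i) < \<infinity>" by auto
  have "inverse (f a * (\<Prod>i\<in>F. f i)) = inverse (f a) * inverse (\<Prod>i\<in>F. f i)"
    using a IH by (intro ennreal_inverse_mult) auto
  moreover have "f a * (\<Prod>i\<in>F. f i) < \<infinity>" using a IH by (simp add: ennreal_mult_less_top)
  moreover have "0 < f a * (\<Prod>i\<in>F. f i)" using a IH by (simp add: ennreal_zero_less_mult_iff)
  ultimately show ?case using insert IH by simp
qed

lemma key0: "AE x in M. x \<in> space M \<and> 0 < hp n x \<and> hp n x < \<infinity> \<and>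
   (\<forall>f\<in>borel_measurable borel_pos. (\<integral>\<^sup>+t. f t \<partial>P x) = (\<integral>\<^sup>+t. f t * ennreal t ^ n \<partial>P ((\<phi>^^n) x)) * inverse (hp n x))"
  using Dn[of n] goodn[of n] AE_space
proof (eventually_elim)
  case (elim x)
  then have x: "x \<in> space M" by simp
  have pr: "(\<Prod>j\<in>{1..n}. inverse (h ((\<phi>^^j) x))) = inverse (hp n x)" "0 < hp n x" "hp n x < \<infinity>"
    using prod_inv_ennreal[of "{1..n}" "\<lambda>j. h ((\<phi>^^j) x)"] elim(2) by (auto simp: hp_def)
  define y where "y = (\<phi>^^n) x"
  have y: "y \<in> space M" using phis x y_def by blast
  have [measurable]: "(\<lambda>t. ennreal t) \<in> borel_measurable (P y)" using y by (intro measP) auto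
  have "\<forall>f\<in>borel_measurable borel_pos. (\<integral>\<^sup>+t. f t \<partial>P x) = (\<integral>\<^sup>+t. f t * ennreal t ^ n \<partial>P y) * inverse (hp n x)"
  proof
    fix f :: "real \<Rightarrow> ennreal" assume f: "f \<in> borel_measurable borel_pos"
    have [measurable]: "f \<in> borel_measurable (P y)" using measP'[OF f y] .
    have "(\<integral>\<^sup>+t. f t \<partial>P x) = (\<integral>\<^sup>+t. f t \<partial>density (P y) (\<lambda>t. ennreal t ^ n * inverse (hp n x)))"
      using elim(1) pr(1) by (simp add: y_def)
    also have "\<dots> = (\<integral>\<^sup>+t. ennreal t ^ n * inverse (hp n x) * f t \<partial>P y)"
      by (rule nn_integral_density) measurable
    also have "\<dots> = (\<integral>\<^sup>+t. f t * ennreal t ^ n * inverse (hp n x) \<partial>P y)"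
      by (simp add: ac_simps)
    also have "\<dots> = (\<integral>\<^sup>+t. f t * ennreal t ^ n \<partial>P y) * inverse (hp n x)"
      by (rule nn_integral_multc) measurable
    finally show "(\<integral>\<^sup>+t. f t \<partial>P x) = (\<integral>\<^sup>+t. f t * ennreal t ^ n \<partial>P y) * inverse (hp n x)" .
  qed
  then show ?case using x pr by (simp add: y_def)
qed

lemma borel_posI: "A \<in> sets borel \<Longrightarrow> A \<subseteq> {0..} \<Longrightarrow> A \<in> sets borel_pos"
  unfolding borel_pos_def sets_restrict_space by (rule image_eqI[of _ _ A]) auto

lemma zero_pos: "{0::real} \<in> sets borel_pos"
  by (rule borel_posI) auto

lemma P0: "AE x in M. emeasure (P x) {0} = 0"
  using key0[of 1]
proof eventually_elim
  case (elim x)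
  have "(indicator {0} :: real \<Rightarrow> ennreal) \<in> borel_measurable borel_pos"
    using zero_pos by measurable
  then have "(\<integral>\<^sup>+t. indicator {0} t \<partial>P x) = (\<integral>\<^sup>+t. indicator {0} t * ennreal t ^ 1 \<partial>P (\<phi> x)) * inverse (hp 1 x)"
    using elim by simp
  also have "(\<integral>\<^sup>+t. indicator {0} t * ennreal t ^ 1 \<partial>P (\<phi> x)) = (\<integral>\<^sup>+t. 0 \<partial>P (\<phi> x))"
    by (rule nn_integral_cong) (auto simp: indicator_def)
  finally have "(\<integral>\<^sup>+t. indicator {0} t \<partial>P x) = 0" by simp
  moreover have "{0} \<in> sets (P x)" using zero_pos Pprob elim by auto
  ultimately show ?case by simp
qed

lemma key: "AE x in M. x \<in> space M \<and> 0 < hp n x \<and> hp n x < \<infinity> \<and>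
   (AE t in P ((\<phi>^^n) x). 0 < t) \<and>
   (\<forall>f\<in>borel_measurable borel_pos. (\<integral>\<^sup>+t. f t \<partial>P x) = (\<integral>\<^sup>+t. f t * ennreal t ^ n \<partial>P ((\<phi>^^n) x)) * inverse (hp n x))"
  using key0[of n] AEn[OF P0, of n]
proof eventually_elim
  case (elim x)
  define y where "y = (\<phi>^^n) x"
  have y: "y \<in> space M" using phis elim y_def by blast
  have "AE t in P y. 0 < t"
  proof (rule AE_I')
    show "{0} \<in> null_sets (P y)" using elim zero_pos Pprob[OF y] by (auto simp: y_def null_sets_def)
    show "{t \<in> space (P y). \<not> 0 < t} \<subseteq> {0}" using Pspace[OF y] by auto
  qed
  then have ae: "AE t in P ((\<phi>^^n) x). 0 < t" by (simp only: y_def)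
  show ?case using elim(1) ae by (elim conjE) (intro conjI; assumption)
qed

lemma bp_meas: "f \<in> borel_measurable borel \<Longrightarrow> f \<in> borel_measurable borel_pos"
  unfolding borel_pos_def by (rule measurable_restrict_space1)

lemma ennreal_cancel_inv: "a * inverse b = (1::ennreal) \<Longrightarrow> 0 < b \<Longrightarrow> b < \<infinity> \<Longrightarrow> a = b"
proof -
  assume a: "a * inverse b = 1" "0 < b" "b < \<infinity>"
  have "b * inverse b = 1" using ennreal_divide_self[of b] a(2,3) by (simp add: divide_ennreal_def)
  then have "a = a * (inverse b * b)" by (simp add: ac_simps)
  also have "\<dots> = b" using a(1) by (simp add: mult.assoc[symmetric])
  finally show ?thesis .
qed

lemma Pone: "x \<in> space M \<Longrightarrow> (\<integral>\<^sup>+t. 1 \<partial>P x) = 1"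
  using Pprob[of x] by (simp add: prob_space.emeasure_space_1)

lemma item_main:
  assumes f: "f \<in> borel_measurable borel_pos"
  shows "AE x in M. (\<integral>\<^sup>+t. f t \<partial>P x) =
            ediv (\<integral>\<^sup>+t. f t * ennreal t ^ n \<partial>P ((\<phi> ^^ n) x)) (\<Prod>j\<in>{1..n}. h ((\<phi> ^^ j) x))"
  using key[of n]
proof eventually_elim
  case (elim x)
  then have hne: "hp n x \<noteq> 0" by auto
  show ?case unfolding hp_def[symmetric] using elim f ediv_eq[OF hne] by simp
qed

lemma item_iv:
  "AE x in M. (\<integral>\<^sup>+t. ennreal t ^ n \<partial>P ((\<phi> ^^ n) x)) = (\<Prod>j\<in>{1..n}. h ((\<phi> ^^ j) x))"
  using key[of n]
proof eventually_elim
  case (elim x)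
  have "(\<lambda>t. 1::ennreal) \<in> borel_measurable borel_pos" by simp
  then have "(\<integral>\<^sup>+t. 1 \<partial>P x) = (\<integral>\<^sup>+t. 1 * ennreal t ^ n \<partial>P ((\<phi> ^^ n) x)) * inverse (hp n x)"
    using elim by blast
  then have "(\<integral>\<^sup>+t. ennreal t ^ n \<partial>P ((\<phi> ^^ n) x)) * inverse (hp n x) = 1"
    using Pone elim by simp
  then show ?case using ennreal_cancel_inv elim by (simp add: hp_def)
qed

lemma item_i:
  assumes \<sigma>: "\<sigma> \<in> sets borel_pos"
  shows "AE x in M. (\<integral>\<^sup>+t\<in>\<sigma>. tpow t m \<partial>P x) =
            ediv (\<integral>\<^sup>+t\<in>\<sigma>. tpow t (m + int n) \<partial>P ((\<phi> ^^ n) x)) (\<Prod>j\<in>{1..n}. h ((\<phi> ^^ j) x))"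
  using key[of n]
proof eventually_elim
  case (elim x)
  have [measurable]: "\<sigma> \<in> sets borel_pos" by (rule \<sigma>)
  have [measurable]: "(\<lambda>t. tpow t m) \<in> borel_measurable borel_pos" by (intro bp_meas) simp
  have "(\<lambda>t. tpow t m * indicator \<sigma> t) \<in> borel_measurable borel_pos" by measurable
  then have "(\<integral>\<^sup>+t\<in>\<sigma>. tpow t m \<partial>P x) = (\<integral>\<^sup>+t. tpow t m * indicator \<sigma> t * ennreal t ^ n \<partial>P ((\<phi>^^n) x)) * inverse (hp n x)"
    using elim by blast
  also have "(\<integral>\<^sup>+t. tpow t m * indicator \<sigma> t * ennreal t ^ n \<partial>P ((\<phi>^^n) x)) = (\<integral>\<^sup>+t\<in>\<sigma>. tpow t (m + int n) \<partial>P ((\<phi> ^^ n) x))"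
  proof (rule nn_integral_cong_AE)
    have ae: "AE t in P ((\<phi>^^n) x). 0 < t" using elim by blast
    then show "AE t in P ((\<phi>^^n) x). tpow t m * indicator \<sigma> t * ennreal t ^ n = tpow t (m + int n) * indicator \<sigma> t"
    proof eventually_elim
      case (elim t)
      have "tpow t m * indicator \<sigma> t * ennreal t ^ n = tpow t m * ennreal t ^ n * indicator \<sigma> t"
        by (simp only: mult.assoc mult.commute[of "indicator \<sigma> t"])
      then show ?case using tpow_mult[OF elim, of m n] by simp
    qed
  qed
  finally have "(\<integral>\<^sup>+t\<in>\<sigma>. tpow t m \<partial>P x) = (\<integral>\<^sup>+t\<in>\<sigma>. tpow t (m + int n) \<partial>P ((\<phi> ^^ n) x)) * inverse (hp n x)" .
  moreover have hne: "hp n x \<noteq> 0" using elim by auto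
  ultimately show ?case unfolding hp_def[symmetric] using ediv_eq[OF hne] by simp
qed

lemma item_ii:
  assumes \<sigma>: "\<sigma> \<in> sets borel_pos"
  shows "AE x in M. (\<integral>\<^sup>+t\<in>\<sigma>. tpow t m \<partial>P x) =
            ediv (\<integral>\<^sup>+t\<in>\<sigma>. tpow t (m + int n) \<partial>P ((\<phi> ^^ n) x)) (\<integral>\<^sup>+t. ennreal t ^ n \<partial>P ((\<phi> ^^ n) x))"
  using item_i[OF \<sigma>, of m n] item_iv[of n] by eventually_elim simp

lemma item_iii:
  assumes \<sigma>: "\<sigma> \<in> sets borel_pos"
  shows "AE x in M. (\<integral>\<^sup>+t\<in>\<sigma>. inverse (ennreal t ^ n) \<partial>P x) =
            ediv (emeasure (P ((\<phi> ^^ n) x)) \<sigma>) (\<Prod>j\<in>{1..n}. h ((\<phi> ^^ j) x))"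
  using key[of n]
proof eventually_elim
  case (elim x)
  have [measurable]: "\<sigma> \<in> sets borel_pos" by (rule \<sigma>)
  have [measurable]: "(\<lambda>t. inverse (ennreal t ^ n)) \<in> borel_measurable borel_pos" by (intro bp_meas) simp
  have "(\<lambda>t. inverse (ennreal t ^ n) * indicator \<sigma> t) \<in> borel_measurable borel_pos" by measurable
  then have "(\<integral>\<^sup>+t\<in>\<sigma>. inverse (ennreal t ^ n) \<partial>P x) = (\<integral>\<^sup>+t. inverse (ennreal t ^ n) * indicator \<sigma> t * ennreal t ^ n \<partial>P ((\<phi>^^n) x)) * inverse (hp n x)"
    using elim by blast
  also have "(\<integral>\<^sup>+t. inverse (ennreal t ^ n) * indicator \<sigma> t * ennreal t ^ n \<partial>P ((\<phi>^^n) x)) = (\<integral>\<^sup>+t. indicator \<sigma> t \<partial>P ((\<phi> ^^ n) x))"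
  proof (rule nn_integral_cong_AE)
    have ae: "AE t in P ((\<phi>^^n) x). 0 < t" using elim by blast
    then show "AE t in P ((\<phi>^^n) x). inverse (ennreal t ^ n) * indicator \<sigma> t * ennreal t ^ n = indicator \<sigma> t"
    proof eventually_elim
      case (elim t)
      have "inverse (ennreal t ^ n) * indicator \<sigma> t * ennreal t ^ n = inverse (ennreal t ^ n) * ennreal t ^ n * indicator \<sigma> t"
        by (simp only: mult.assoc mult.commute[of "indicator \<sigma> t"])
      then show ?case using inv_pow_cancel[OF elim, of n] by simp
    qed
  qed
  also have "\<dots> = emeasure (P ((\<phi> ^^ n) x)) \<sigma>"
    using Pprob[OF phis[OF conjunct1[OF elim]]] \<sigma> by (intro nn_integral_indicator) simp
  finally have "(\<integral>\<^sup>+t\<in>\<sigma>. inverse (ennreal t ^ n) \<partial>P x) = emeasure (P ((\<phi> ^^ n) x)) \<sigma> * inverse (hp n x)" .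
  moreover have hne: "hp n x \<noteq> 0" using elim by auto
  ultimately show ?case unfolding hp_def[symmetric] using ediv_eq[OF hne] by simp
qed

lemma item_v:
  "AE x in M. (\<integral>\<^sup>+t. inverse (ennreal t ^ n) \<partial>P x) = ediv 1 (\<Prod>j\<in>{1..n}. h ((\<phi> ^^ j) x))"
  using key[of n]
proof eventually_elim
  case (elim x)
  have "(\<lambda>t. inverse (ennreal t ^ n)) \<in> borel_measurable borel_pos" by (intro bp_meas) simp
  then have "(\<integral>\<^sup>+t. inverse (ennreal t ^ n) \<partial>P x) = (\<integral>\<^sup>+t. inverse (ennreal t ^ n) * ennreal t ^ n \<partial>P ((\<phi>^^n) x)) * inverse (hp n x)"
    using elim by blast
  also have "(\<integral>\<^sup>+t. inverse (ennreal t ^ n) * ennreal t ^ n \<partial>P ((\<phi>^^n) x)) = (\<integral>\<^sup>+t. 1 \<partial>P ((\<phi> ^^ n) x))"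
  proof (rule nn_integral_cong_AE)
    have ae: "AE t in P ((\<phi>^^n) x). 0 < t" using elim by blast
    then show "AE t in P ((\<phi>^^n) x). inverse (ennreal t ^ n) * ennreal t ^ n = 1"
    proof eventually_elim
      case (elim t)
      from inv_pow_cancel[OF elim, of n] show ?case .
    qed
  qed
  also have "\<dots> = 1" using Pone phis elim by blast
  finally have "(\<integral>\<^sup>+t. inverse (ennreal t ^ n) \<partial>P x) = inverse (hp n x)" by simp
  moreover have hne: "hp n x \<noteq> 0" using elim by auto
  ultimately show ?case unfolding hp_def[symmetric] using ediv_eq[OF hne] by simp
qed

definition gn :: "nat \<Rightarrow> 'a \<Rightarrow> ennreal" where
  "gn n x = (\<integral>\<^sup>+t. ennreal t ^ n \<partial>P x)"

definition Gn :: "nat \<Rightarrow> 'a \<Rightarrow> ennreal" where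
  "Gn n y = gn (Suc n) y * inverse (h y)"

lemma gn_meas[measurable]: "gn n \<in> borel_measurable M"
  unfolding gn_def by (rule intmeas) (intro bp_meas, simp)

lemma Gn_meas[measurable]: "Gn n \<in> borel_measurable M"
  unfolding Gn_def by measurable

lemma gn_Gn: "AE x in M. gn n x = Gn n (\<phi> x)"
  using key[of 1]
proof eventually_elim
  case (elim x)
  have "(\<lambda>t. ennreal t ^ n) \<in> borel_measurable borel_pos" by (intro bp_meas) simp
  then have "gn n x = (\<integral>\<^sup>+t. ennreal t ^ n * ennreal t ^ 1 \<partial>P ((\<phi>^^1) x)) * inverse (hp 1 x)"
    using elim unfolding gn_def by blast
  also have "(\<lambda>t. ennreal t ^ n * ennreal t ^ 1) = (\<lambda>t. ennreal t ^ Suc n)"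
    by (simp add: mult.commute)
  finally show ?case by (simp add: Gn_def gn_def hp_def)
qed

lemma sets_preimage: "B \<in> sets M \<Longrightarrow> emeasure M (\<phi> -` B \<inter> space M) = (\<integral>\<^sup>+x. h x * indicator B x \<partial>M)"
proof -
  assume B[measurable]: "B \<in> sets M"
  have "emeasure M (\<phi> -` B \<inter> space M) = (\<integral>\<^sup>+x. indicator (\<phi> -` B \<inter> space M) x \<partial>M)"
    by (rule nn_integral_indicator[symmetric]) (rule measurable_sets[OF phim B])
  also have "\<dots> = (\<integral>\<^sup>+x. indicator B (\<phi> x) \<partial>M)"
    by (rule nn_integral_cong) (auto simp: indicator_def)
  also have "\<dots> = (\<integral>\<^sup>+x. h x * indicator B x \<partial>M)" by (rule intcomp) simp
  finally show ?thesis .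
qed

context
  assumes hposAE: "AE x in M. 0 < h x"
begin

lemma Gn_h: "AE y in M. Gn n y * h y = gn (Suc n) y"
  using hposAE hfin
proof eventually_elim
  case (elim y)
  have "inverse (h y) * h y = 1"
    using ennreal_divide_self[of "h y"] elim by (simp add: divide_ennreal_def mult.commute)
  then show ?case unfolding Gn_def by (simp add: mult.assoc)
qed

lemma int_funpow: "u \<in> borel_measurable M \<Longrightarrow> (\<integral>\<^sup>+x. u ((\<phi>^^n) x) \<partial>M) = (\<integral>\<^sup>+x. u x * gn n x \<partial>M)"
proof (induction n arbitrary: u)
  case 0
  show ?case
    by (rule nn_integral_cong) (simp add: gn_def Pprob prob_space.emeasure_space_1)
next
  case (Suc n)
  have u[measurable]: "u \<in> borel_measurable M" by (rule Suc.prems)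
  have "(\<integral>\<^sup>+x. u ((\<phi>^^Suc n) x) \<partial>M) = (\<integral>\<^sup>+x. (\<lambda>y. u (\<phi> y)) ((\<phi>^^n) x) \<partial>M)" by simp
  also have "\<dots> = (\<integral>\<^sup>+x. u (\<phi> x) * gn n x \<partial>M)"
    by (rule Suc.IH) measurable
  also have "\<dots> = (\<integral>\<^sup>+x. (\<lambda>y. u y * Gn n y) (\<phi> x) \<partial>M)"
    by (rule nn_integral_cong_AE) (use gn_Gn[of n] in \<open>eventually_elim, simp\<close>)
  also have "\<dots> = (\<integral>\<^sup>+x. h x * (u x * Gn n x) \<partial>M)"
    by (rule intcomp) measurable
  also have "\<dots> = (\<integral>\<^sup>+x. u x * gn (Suc n) x \<partial>M)"
    by (rule nn_integral_cong_AE) (use Gn_h[of n] in \<open>eventually_elim, simp add: ac_simps\<close>)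
  finally show ?case .
qed

lemma hphin: "AE x in M. hphi M (\<phi>^^n) x = gn n x"
proof -
  have "density M (gn n) = distr M M (\<phi>^^n)"
  proof (rule measure_eqI)
    show "sets (density M (gn n)) = sets (distr M M (\<phi>^^n))" by simp
    fix A assume "A \<in> sets (density M (gn n))"
    then have A[measurable]: "A \<in> sets M" by simp
    have "emeasure (distr M M (\<phi>^^n)) A = (\<integral>\<^sup>+x. indicator A x \<partial>distr M M (\<phi>^^n))"
      by (rule nn_integral_indicator[symmetric]) simp
    also have "\<dots> = (\<integral>\<^sup>+x. indicator A ((\<phi>^^n) x) \<partial>M)"
      by (rule nn_integral_distr) simp_all
    also have "\<dots> = (\<integral>\<^sup>+x. indicator A x * gn n x \<partial>M)"
      by (rule int_funpow) simp
    also have "\<dots> = emeasure (density M (gn n)) A"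
      by (simp add: emeasure_density ac_simps)
    finally show "emeasure (density M (gn n)) A = emeasure (distr M M (\<phi>^^n)) A" by simp
  qed
  from sigma_finite_measure.RN_deriv_unique[OF sf gn_meas this]
  show ?thesis unfolding hphi_def by (auto elim: AE_mp)
qed

end

lemma phi_funcset: "\<phi> \<in> space M \<rightarrow> space M"
  using phis1 by auto

lemma subalg: "subalgebra M (vimage_algebra (space M) \<phi> M)"
  unfolding subalgebra_def sets_vimage_algebra2[OF phi_funcset]
  using measurable_sets[OF phim] by auto

lemma sfR: "sigma_finite_measure (restr_to_subalg M (vimage_algebra (space M) \<phi> M))"
proof
  let ?V = "vimage_algebra (space M) \<phi> M"
  let ?R = "restr_to_subalg M ?V"
  obtain A where A: "countable A" "A \<subseteq> sets M" "\<Union>A = space M" "\<forall>a\<in>A. emeasure M a \<noteq> \<infinity>"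
    using sigma_finite_measure.sigma_finite_countable[OF sf] by blast
  define B where "B = (\<lambda>(a, k::nat). a \<inter> {y\<in>space M. h y \<le> of_nat k}) ` (A \<times> UNIV)"
  define Z where "Z = {y\<in>space M. h y = \<infinity>}"
  define F where "F = (\<lambda>b. \<phi> -` b \<inter> space M) ` (insert Z B)"
  have Bs: "B \<subseteq> sets M" using A(2) unfolding B_def by auto
  have Zs: "Z \<in> sets M" unfolding Z_def by measurable
  show "\<exists>A. countable A \<and> A \<subseteq> sets ?R \<and> \<Union>A = space ?R \<and> (\<forall>a\<in>A. emeasure ?R a \<noteq> \<infinity>)"
  proof (intro exI conjI)
    show "countable F" unfolding F_def B_def using A(1) by auto
    have FV: "F \<subseteq> sets ?V" unfolding F_def using Bs Zs by (auto intro: in_vimage_algebra)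
    then show "F \<subseteq> sets ?R" using sets_restr_to_subalg[OF subalg] by simp
    show "\<Union>F = space ?R"
    proof
      show "\<Union>F \<subseteq> space ?R" unfolding F_def space_restr_to_subalg by auto
      show "space ?R \<subseteq> \<Union>F"
      proof
        fix x assume "x \<in> space ?R"
        then have x: "x \<in> space M" by (simp add: space_restr_to_subalg)
        then have y: "\<phi> x \<in> space M" by (rule phis1)
        then obtain a where a: "a \<in> A" "\<phi> x \<in> a" using A(3) by auto
        show "x \<in> \<Union>F"
        proof (cases "h (\<phi> x) = \<infinity>")
          case True
          then have "x \<in> \<phi> -` Z \<inter> space M" using x y by (simp add: Z_def)
          then show ?thesis unfolding F_def by blast
        next
          case False
          then obtain k where "h (\<phi> x) < of_nat k" using ennreal_Ex_less_of_nat by (auto simp: top.not_eq_extremum)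
          then have "x \<in> \<phi> -` (a \<inter> {y\<in>space M. h y \<le> of_nat k}) \<inter> space M" using x y a by auto
          moreover have "a \<inter> {y\<in>space M. h y \<le> of_nat k} \<in> B" using a unfolding B_def by auto
          ultimately show ?thesis unfolding F_def by blast
        qed
      qed
    qed
    show "\<forall>f\<in>F. emeasure ?R f \<noteq> \<infinity>"
    proof
      fix f assume f: "f \<in> F"
      then have fV: "f \<in> sets ?V" using FV by auto
      from f obtain b where b: "b \<in> insert Z B" "f = \<phi> -` b \<inter> space M" unfolding F_def by auto
      have bs[measurable]: "b \<in> sets M" using b(1) Bs Zs by auto
      have "emeasure ?R f = emeasure M f" by (rule emeasure_restr_to_subalg[OF subalg fV])
      also have "\<dots> = (\<integral>\<^sup>+x. h x * indicator b x \<partial>M)" using b(2) sets_preimage[OF bs] by simp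
      finally have e: "emeasure ?R f = (\<integral>\<^sup>+x. h x * indicator b x \<partial>M)" .
      show "emeasure ?R f \<noteq> \<infinity>"
      proof (cases "b = Z")
        case True
        have "(\<integral>\<^sup>+x. h x * indicator b x \<partial>M) = (\<integral>\<^sup>+x. 0 \<partial>M)"
          by (rule nn_integral_cong_AE) (use hfin in \<open>eventually_elim, auto simp: True Z_def indicator_def\<close>)
        then show ?thesis using e by simp
      next
        case False
        then obtain a k where ak: "a \<in> A" "b = a \<inter> {y\<in>space M. h y \<le> of_nat k}" using b(1) unfolding B_def by auto
        have as[measurable]: "a \<in> sets M" using ak A(2) by auto
        have "(\<integral>\<^sup>+x. h x * indicator b x \<partial>M) \<le> (\<integral>\<^sup>+x. of_nat k * indicator a x \<partial>M)"
          by (rule nn_integral_mono) (auto simp: ak indicator_def)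
        also have "\<dots> = of_nat k * emeasure M a" by (rule nn_integral_cmult_indicator[OF as])
        also have "\<dots> < \<infinity>" using A(4) ak(1) by (simp add: ennreal_mult_less_top top.not_eq_extremum of_nat_less_top)
        finally show ?thesis using e by simp
      qed
    qed
  qed
qed

context
  assumes hposAE: "AE x in M. 0 < h x"
begin

lemma hphin_G: "AE x in M. hphi M (\<phi>^^n) x = Gn n (\<phi> x)"
  using hphin[OF hposAE, of n] gn_Gn[of n] by eventually_elim simp

lemma cond_exist: "is_cond_exp M \<phi> (hphi M (\<phi>^^n)) (\<lambda>x. Gn n (\<phi> x))"
  unfolding is_cond_exp_def
proof (intro conjI ballI)
  show "(\<lambda>x. Gn n (\<phi> x)) \<in> borel_measurable (vimage_algebra (space M) \<phi> M)"
    using measurable_comp[OF measurable_vimage_algebra1[OF phi_funcset] Gn_meas[of n]]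
    by (simp add: comp_def)
  fix u :: "'a \<Rightarrow> ennreal" assume "u \<in> borel_measurable M"
  show "(\<integral>\<^sup>+x. u (\<phi> x) * hphi M (\<phi>^^n) x \<partial>M) = (\<integral>\<^sup>+x. u (\<phi> x) * Gn n (\<phi> x) \<partial>M)"
    by (rule nn_integral_cong_AE) (use hphin_G[of n] in \<open>eventually_elim, simp\<close>)
qed

lemma cond_unique:
  assumes g: "is_cond_exp M \<phi> (hphi M (\<phi>^^n)) g"
  shows "AE x in M. g x = hphi M (\<phi>^^n) x"
proof -
  let ?V = "vimage_algebra (space M) \<phi> M"
  let ?R = "restr_to_subalg M ?V"
  let ?G = "\<lambda>x. Gn n (\<phi> x)"
  have gV[measurable]: "g \<in> borel_measurable ?V" and gI: "\<And>u. u \<in> borel_measurable M \<Longrightarrow>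
     (\<integral>\<^sup>+x. u (\<phi> x) * hphi M (\<phi>^^n) x \<partial>M) = (\<integral>\<^sup>+x. u (\<phi> x) * g x \<partial>M)"
    using g unfolding is_cond_exp_def by auto
  have GV[measurable]: "?G \<in> borel_measurable ?V" and GI: "\<And>u. u \<in> borel_measurable M \<Longrightarrow>
     (\<integral>\<^sup>+x. u (\<phi> x) * hphi M (\<phi>^^n) x \<partial>M) = (\<integral>\<^sup>+x. u (\<phi> x) * ?G x \<partial>M)"
    using cond_exist[of n] unfolding is_cond_exp_def by auto
  have int_eq: "(\<integral>\<^sup>+x. f x * indicator A x \<partial>?R) = (\<integral>\<^sup>+x. u (\<phi> x) * f x \<partial>M)"
    if f: "f \<in> borel_measurable ?V" and u: "u \<in> borel_measurable M" and A: "A = \<phi> -` B \<inter> space M"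
       and B: "B \<in> sets M" and uB: "u = indicator B" for f A u B
  proof -
    have AV: "A \<in> sets ?V" using A B by (auto intro: in_vimage_algebra)
    have "(\<integral>\<^sup>+x. f x * indicator A x \<partial>?R) = (\<integral>\<^sup>+x. f x * indicator A x \<partial>M)"
    proof (rule nn_integral_subalgebra2[OF subalg])
      have [measurable]: "f \<in> borel_measurable ?V" "A \<in> sets ?V" using f AV by auto
      show "(\<lambda>x. f x * indicator A x) \<in> borel_measurable ?V" by measurable
    qed
    also have "\<dots> = (\<integral>\<^sup>+x. u (\<phi> x) * f x \<partial>M)"
      by (rule nn_integral_cong) (auto simp: A uB indicator_def)
    finally show ?thesis .
  qed
  have "density ?R g = density ?R ?G"
  proof (rule measure_eqI)
    show "sets (density ?R g) = sets (density ?R ?G)" by simp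
    fix A assume "A \<in> sets (density ?R g)"
    then have "A \<in> sets ?V" using sets_restr_to_subalg[OF subalg] by simp
    then obtain B where B: "B \<in> sets M" "A = \<phi> -` B \<inter> space M"
      using sets_vimage_algebra2[OF phi_funcset] by auto
    have uB: "indicator B \<in> borel_measurable M" using B(1) by simp
    have gR: "g \<in> borel_measurable ?R" by (rule measurable_in_subalg[OF subalg gV])
    have GR: "?G \<in> borel_measurable ?R" by (rule measurable_in_subalg[OF subalg GV])
    have As: "A \<in> sets ?R" using \<open>A \<in> sets ?V\<close> sets_restr_to_subalg[OF subalg] by simp
    have "emeasure (density ?R g) A = (\<integral>\<^sup>+x. g x * indicator A x \<partial>?R)"
      by (rule emeasure_density[OF gR As])
    also have "\<dots> = (\<integral>\<^sup>+x. indicator B (\<phi> x) * g x \<partial>M)"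
      by (rule int_eq[OF gV uB B(2) B(1) refl])
    also have "\<dots> = (\<integral>\<^sup>+x. indicator B (\<phi> x) * ?G x \<partial>M)"
      using gI[OF uB] GI[OF uB] by simp
    also have "\<dots> = (\<integral>\<^sup>+x. ?G x * indicator A x \<partial>?R)"
      by (rule int_eq[OF GV uB B(2) B(1) refl, symmetric])
    also have "\<dots> = emeasure (density ?R ?G) A"
      by (rule emeasure_density[OF GR As, symmetric])
    finally show "emeasure (density ?R g) A = emeasure (density ?R ?G) A" .
  qed
  then have "AE x in ?R. g x = ?G x"
    by (rule sigma_finite_measure.density_unique[OF sfR measurable_in_subalg[OF subalg gV] measurable_in_subalg[OF subalg GV]])
  then have "AE x in M. g x = ?G x" by (rule AE_restr_to_subalg[OF subalg])
  then show ?thesis using hphin_G[of n] by eventually_elim simp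
qed

end

end

theorem proposition24:
  fixes M :: "'a measure" and \<phi> :: "'a \<Rightarrow> 'a" and P :: "'a \<Rightarrow> real measure"
  assumes sf: "sigma_finite_measure M"
    and ns: "nonsingular M \<phi>"
    and hfin: "AE x in M. hphi M \<phi> x < \<infinity>"
    and Pprob: "\<And>x. x \<in> space M \<Longrightarrow> prob_space (P x) \<and> sets (P x) = sets borel_pos"
    and Pmeas: "\<And>\<sigma>. \<sigma> \<in> sets borel_pos \<Longrightarrow> (\<lambda>x. emeasure (P x) \<sigma>) \<in> borel_measurable M"
    and SCC: "\<And>\<sigma>. \<sigma> \<in> sets borel_pos \<Longrightarrow>
       AE x in M. emeasure (P x) \<sigma> = ediv (\<integral>\<^sup>+t\<in>\<sigma>. ennreal t \<partial>P (\<phi> x)) (hphi M \<phi> (\<phi> x))"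
  shows "(AE x in M. emeasure (P x) {0} = 0)
    \<and> (\<forall>f \<in> borel_measurable borel_pos. \<forall>n::nat. n \<ge> 1 \<longrightarrow>
         (AE x in M. (\<integral>\<^sup>+t. f t \<partial>P x) =
            ediv (\<integral>\<^sup>+t. f t * ennreal t ^ n \<partial>P ((\<phi> ^^ n) x)) (\<Prod>j\<in>{1..n}. hphi M \<phi> ((\<phi> ^^ j) x))))
    \<and> (\<forall>n::nat. \<forall>m::int. \<forall>\<sigma> \<in> sets borel_pos. n \<ge> 1 \<longrightarrow>
         (AE x in M. (\<integral>\<^sup>+t\<in>\<sigma>. tpow t m \<partial>P x) =
            ediv (\<integral>\<^sup>+t\<in>\<sigma>. tpow t (m + int n) \<partial>P ((\<phi> ^^ n) x)) (\<Prod>j\<in>{1..n}. hphi M \<phi> ((\<phi> ^^ j) x))))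
    \<and> (\<forall>n::nat. \<forall>m::int. \<forall>\<sigma> \<in> sets borel_pos. n \<ge> 1 \<longrightarrow>
         (AE x in M. (\<integral>\<^sup>+t\<in>\<sigma>. tpow t m \<partial>P x) =
            ediv (\<integral>\<^sup>+t\<in>\<sigma>. tpow t (m + int n) \<partial>P ((\<phi> ^^ n) x)) (\<integral>\<^sup>+t. ennreal t ^ n \<partial>P ((\<phi> ^^ n) x))))
    \<and> (\<forall>n::nat. \<forall>\<sigma> \<in> sets borel_pos. n \<ge> 1 \<longrightarrow>
         (AE x in M. (\<integral>\<^sup>+t\<in>\<sigma>. inverse (ennreal t ^ n) \<partial>P x) =
            ediv (emeasure (P ((\<phi> ^^ n) x)) \<sigma>) (\<Prod>j\<in>{1..n}. hphi M \<phi> ((\<phi> ^^ j) x))))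
    \<and> (\<forall>n::nat. n \<ge> 1 \<longrightarrow>
         (AE x in M. (\<integral>\<^sup>+t. ennreal t ^ n \<partial>P ((\<phi> ^^ n) x)) = (\<Prod>j\<in>{1..n}. hphi M \<phi> ((\<phi> ^^ j) x))))
    \<and> (\<forall>n::nat. n \<ge> 1 \<longrightarrow>
         (AE x in M. (\<integral>\<^sup>+t. inverse (ennreal t ^ n) \<partial>P x) = ediv 1 (\<Prod>j\<in>{1..n}. hphi M \<phi> ((\<phi> ^^ j) x))))
    \<and> ((AE x in M. 0 < hphi M \<phi> x) \<longrightarrow>
         (\<forall>n::nat. (\<exists>g. is_cond_exp M \<phi> (hphi M (\<phi> ^^ n)) g) \<and>
            (\<forall>g. is_cond_exp M \<phi> (hphi M (\<phi> ^^ n)) g \<longrightarrow> (AE x in M. g x = hphi M (\<phi> ^^ n) x))))"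
proof -
  interpret p: prop24 M \<phi> P by (rule prop24.intro[OF sf ns hfin Pprob Pmeas SCC])
  show ?thesis
  proof (intro conjI ballI allI impI)
    show "AE x in M. emeasure (P x) {0} = 0" by (rule p.P0)
  next
    fix f :: "real \<Rightarrow> ennreal" and n :: nat assume "f \<in> borel_measurable borel_pos"
    then show "AE x in M. (\<integral>\<^sup>+t. f t \<partial>P x) =
            ediv (\<integral>\<^sup>+t. f t * ennreal t ^ n \<partial>P ((\<phi> ^^ n) x)) (\<Prod>j\<in>{1..n}. hphi M \<phi> ((\<phi> ^^ j) x))"
      by (rule p.item_main)
  next
    fix n m \<sigma> assume "\<sigma> \<in> sets borel_pos"
    then show "AE x in M. (\<integral>\<^sup>+t\<in>\<sigma>. tpow t m \<partial>P x) =
            ediv (\<integral>\<^sup>+t\<in>\<sigma>. tpow t (m + int n) \<partial>P ((\<phi> ^^ n) x)) (\<Prod>j\<in>{1..n}. hphi M \<phi> ((\<phi> ^^ j) x))"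
      by (rule p.item_i)
  next
    fix n m \<sigma> assume "\<sigma> \<in> sets borel_pos"
    then show "AE x in M. (\<integral>\<^sup>+t\<in>\<sigma>. tpow t m \<partial>P x) =
            ediv (\<integral>\<^sup>+t\<in>\<sigma>. tpow t (m + int n) \<partial>P ((\<phi> ^^ n) x)) (\<integral>\<^sup>+t. ennreal t ^ n \<partial>P ((\<phi> ^^ n) x))"
      by (rule p.item_ii)
  next
    fix n \<sigma> assume "\<sigma> \<in> sets borel_pos"
    then show "AE x in M. (\<integral>\<^sup>+t\<in>\<sigma>. inverse (ennreal t ^ n) \<partial>P x) =
            ediv (emeasure (P ((\<phi> ^^ n) x)) \<sigma>) (\<Prod>j\<in>{1..n}. hphi M \<phi> ((\<phi> ^^ j) x))"
      by (rule p.item_iii)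
  next
    fix n :: nat
    show "AE x in M. (\<integral>\<^sup>+t. ennreal t ^ n \<partial>P ((\<phi> ^^ n) x)) = (\<Prod>j\<in>{1..n}. hphi M \<phi> ((\<phi> ^^ j) x))"
      by (rule p.item_iv)
  next
    fix n :: nat
    show "AE x in M. (\<integral>\<^sup>+t. inverse (ennreal t ^ n) \<partial>P x) = ediv 1 (\<Prod>j\<in>{1..n}. hphi M \<phi> ((\<phi> ^^ j) x))"
      by (rule p.item_v)
  next
    fix n :: nat assume hp: "AE x in M. 0 < hphi M \<phi> x"
    show "\<exists>g. is_cond_exp M \<phi> (hphi M (\<phi> ^^ n)) g"
      using p.cond_exist[OF hp] by blast
  next
    fix n :: nat and g assume hp: "AE x in M. 0 < hphi M \<phi> x"
      and "is_cond_exp M \<phi> (hphi M (\<phi> ^^ n)) g"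
    then show "AE x in M. g x = hphi M (\<phi> ^^ n) x"
      by (rule p.cond_unique)
  qed
qed

end
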